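(* Let $X_1,X_2$ be nonnegative real random variables, each with an absolutely continuous distribution function $F_i$ with density $f_i$. Let $0<\lambda_1\le\lambda_2\le1$, and define \[ I:=\sup_{\varphi_1,\varphi_2}\int_0^\infty\big(\varphi_1(t)K_1(t)+\varphi_2(t)K_2(t)\big)\,\mathrm{d}t, \] the supremum over all functions $\varphi_i:\mathbb{R}_+\to[0,\lambda_i]$ ($i=1,2$) such that $\varphi_1+\varphi_2$ is nondecreasing, where $K_1(t)=f_2(t)(H_1(t)-r_1)-G_1(t)G_2(t)$ and $K_2(t)=f_1(t)(H_2(t)-r_2)-G_1(t)G_2(t)$. Then \[ I\le\frac1e\Big(\lambda_2r_1+\lambda_1r_2+\lambda_1(e-1)\min\{r_1,r_2\}\Big). \]
   Context: $G_i(t)=1-F_i(t)=\mathbb{P}[X_i\ge t]$, $H_i(t)=\int_0^tG_i(u)\,\mathrm{d}u$, and $r_i=\textsc{Rev}(X_i)=\sup_{p\ge0}p\,\mathbb{P}[X_i\ge p]$ is the optimal one-good revenue from $X_i$. All functions are Borel measurable. *)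

theory Defs
  imports "HOL-Probability.Probability"
begin

definition surv :: "'a measure \<Rightarrow> ('a \<Rightarrow> real) \<Rightarrow> real \<Rightarrow> real" where
  "surv M X t = measure M {\<omega> \<in> space M. X \<omega> \<ge> t}"

definition cumsurv :: "'a measure \<Rightarrow> ('a \<Rightarrow> real) \<Rightarrow> real \<Rightarrow> real" where
  "cumsurv M X t = (LINT u:{0..t}|lborel. surv M X u)"

definition Rev :: "'a measure \<Rightarrow> ('a \<Rightarrow> real) \<Rightarrow> real" where
  "Rev M X = Sup {p * surv M X p | p. p \<ge> 0}"

end

theory Submission
  imports Defs
begin


lemma nn_set_eq:
  fixes h :: "real \<Rightarrow> real"
  assumes "set_integrable lborel A h" "\<And>x. x \<in> A \<Longrightarrow> 0 \<le> h x"
  shows "(\<integral>\<^sup>+x. ennreal (h x) * indicator A x \<partial>lborel) = ennreal (LINT x:A|lborel. h x)"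
proof -
  have "(\<integral>\<^sup>+x. ennreal (h x) * indicator A x \<partial>lborel) = (\<integral>\<^sup>+x. ennreal (indicator A x *\<^sub>R h x) \<partial>lborel)"
    by (intro nn_integral_cong) (auto split: split_indicator)
  also have "\<dots> = ennreal (integral\<^sup>L lborel (\<lambda>x. indicator A x *\<^sub>R h x))"
    using assms unfolding set_integrable_def
    by (intro nn_integral_eq_integral) (auto split: split_indicator)
  finally show ?thesis unfolding set_lebesgue_integral_def .
qed

lemma set_integrable_nn:
  fixes h :: "real \<Rightarrow> real"
  assumes "h \<in> borel_measurable borel" "A \<in> sets borel" "\<And>x. x \<in> A \<Longrightarrow> 0 \<le> h x"
    "(\<integral>\<^sup>+x. ennreal (h x) * indicator A x \<partial>lborel) < \<infinity>"
  shows "set_integrable lborel A h"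
  unfolding set_integrable_def
proof (rule integrableI_bounded)
  show "(\<lambda>x. indicator A x *\<^sub>R h x) \<in> borel_measurable lborel" using assms by simp
  have "(\<integral>\<^sup>+x. ennreal (norm (indicator A x *\<^sub>R h x)) \<partial>lborel) = (\<integral>\<^sup>+x. ennreal (h x) * indicator A x \<partial>lborel)"
    using assms(3) by (intro nn_integral_cong) (auto split: split_indicator)
  then show "(\<integral>\<^sup>+x. ennreal (norm (indicator A x *\<^sub>R h x)) \<partial>lborel) < \<infinity>" using assms(4) by simp
qed

lemma set_integrable_bounded_fin:
  fixes h :: "real \<Rightarrow> real"
  assumes "h \<in> borel_measurable borel" "\<And>x. 0 \<le> h x" "\<And>x. h x \<le> 1"
  shows "set_integrable lborel {a..b} h" "set_integrable lborel {a..<b} h"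
proof -
  have "(\<integral>\<^sup>+x. ennreal (h x) * indicator {a..b} x \<partial>lborel) \<le> (\<integral>\<^sup>+x. indicator {a..b} x \<partial>lborel)"
    using assms by (intro nn_integral_mono) (auto split: split_indicator)
  also have "\<dots> < \<infinity>" by (simp add: emeasure_lborel_Icc_eq)
  finally show "set_integrable lborel {a..b} h" using assms by (intro set_integrable_nn) auto
  have "(\<integral>\<^sup>+x. ennreal (h x) * indicator {a..<b} x \<partial>lborel) \<le> (\<integral>\<^sup>+x. indicator {a..b} x \<partial>lborel)"
    using assms by (intro nn_integral_mono) (auto split: split_indicator)
  also have "\<dots> < \<infinity>" by (simp add: emeasure_lborel_Icc_eq)
  finally show "set_integrable lborel {a..<b} h" using assms by (intro set_integrable_nn) auto
qed



lemma upset_int: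
  fixes h u :: "real \<Rightarrow> real"
  assumes hm: "h \<in> borel_measurable borel" and hi: "set_integrable lborel {0..} h"
    and um: "u \<in> borel_measurable borel"
    and umono: "mono_on {0..} u"
    and hb: "\<And>a. 0 \<le> a \<Longrightarrow> (LINT t:{a..}|lborel. h t) \<le> \<beta>" and b0: "0 \<le> \<beta>"
  shows "(LINT t:{t. 0 \<le> t \<and> c \<le> u t}|lborel. h t) \<le> \<beta>"
proof -
  define S where "S = {t. 0 \<le> t \<and> c \<le> u t}"
  have Sm: "S \<in> sets borel" unfolding S_def using um by measurable
  show ?thesis
  proof (cases "S = {}")
    case True then show ?thesis using b0 unfolding S_def[symmetric] by (simp add: set_lebesgue_integral_def)
  next
    case False
    define a where "a = Inf S"
    have bb: "bdd_below S" by (rule bdd_belowI[of _ 0]) (simp add: S_def)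
    have a0: "0 \<le> a" unfolding a_def by (rule cInf_greatest[OF False]) (simp add: S_def)
    have sub: "x \<in> S \<Longrightarrow> a \<le> x" for x unfolding a_def by (rule cInf_lower[OF _ bb])
    have sup: "a < t \<Longrightarrow> t \<in> S" for t
    proof -
      assume "a < t"
      then have "Inf S < t" by (simp add: a_def)
      then obtain s where s: "s \<in> S" "s < t" using cInf_less_iff[OF False bb] by blast
      then have s0: "0 \<le> s" "c \<le> u s" by (simp_all add: S_def)
      then have "u s \<le> u t" using s(2) umono by (intro mono_onD[OF umono]) auto
      then show "t \<in> S" using s s0 by (simp add: S_def)
    qed
    have ae: "AE x in lborel. x \<in> S \<longleftrightarrow> x \<in> {a..}"
    proof (rule AE_mp[OF AE_lborel_singleton[of a]], rule AE_I2, rule impI)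
      fix x :: real assume "x \<noteq> a"
      then show "x \<in> S \<longleftrightarrow> x \<in> {a..}" using sub[of x] sup[of x] by (cases "a < x") auto
    qed
    have m1: "set_borel_measurable lborel S h" unfolding set_borel_measurable_def
      using Sm hm by simp
    have m2: "set_borel_measurable lborel {a..} h" unfolding set_borel_measurable_def
      using hm by simp
    have "(LINT t:S|lborel. h t) = (LINT t:{a..}|lborel. h t)"
      using set_integral_cong_set[OF m1 m2 ae] by simp
    also have "\<dots> \<le> \<beta>" using hb a0 by simp
    finally show ?thesis unfolding S_def .
  qed
qed

lemma layer:
  fixes h u :: "real \<Rightarrow> real" and L \<beta> :: real
  assumes hm: "h \<in> borel_measurable borel" and hi: "set_integrable lborel {0..} h"
    and um: "u \<in> borel_measurable borel"
    and ub: "\<And>t. 0 \<le> t \<Longrightarrow> 0 \<le> u t \<and> u t \<le> L"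
    and umono: "mono_on {0..} u"
    and hb: "\<And>a. 0 \<le> a \<Longrightarrow> (LINT t:{a..}|lborel. h t) \<le> \<beta>" and b0: "0 \<le> \<beta>"
  shows "(LINT t:{0..}|lborel. u t * h t) \<le> L * \<beta>"
proof -
  have L0: "0 \<le> L" using ub[of 0] by simp
  have hi': "integrable lborel (\<lambda>t. indicator {0..} t * h t)" using hi by (simp add: set_integrable_def)
  have hia: "integrable lborel (\<lambda>t. indicator {0..} t * \<bar>h t\<bar>)"
    using integrable_abs[OF hi'] by (simp add: abs_mult)
  have uhi: "integrable lborel (\<lambda>t. indicator {0..} t * (u t * h t))"
  proof (rule Bochner_Integration.integrable_bound[where f="\<lambda>t. L * (indicator {0..} t * h t)"])
    show "integrable lborel (\<lambda>t. L * (indicator {0..} t * h t))" using hi' by simp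
    show "(\<lambda>t. indicator {0..} t * (u t * h t)) \<in> borel_measurable lborel" using hm um by simp
    show "AE x in lborel. norm (indicator {0..} x * (u x * h x)) \<le> norm (L * (indicator {0..} x * h x))"
    proof (rule AE_I2)
      fix x show "norm (indicator {0..} x * (u x * h x)) \<le> norm (L * (indicator {0..} x * h x))"
      proof (cases "0 \<le> x")
        case True
        then have "\<bar>u x\<bar> \<le> \<bar>L\<bar>" using ub[OF True] by simp
        then have "\<bar>u x\<bar> * \<bar>h x\<bar> \<le> \<bar>L\<bar> * \<bar>h x\<bar>" by (rule mult_right_mono) simp
        then show ?thesis using True by (simp add: abs_mult)
      qed simp
    qed
  qed
  define A where "A = (LINT t:{0..}|lborel. u t * h t)"
  define D where "D = integral\<^sup>L lborel (\<lambda>t. indicator {0..} t * \<bar>h t\<bar>)"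
  have D0: "0 \<le> D" unfolding D_def by (intro integral_nonneg_AE) (auto split: split_indicator)
  have key: "A \<le> L * \<beta> + L * D / real n" if n1: "1 \<le> n" for n :: nat
  proof -
    define S where "S k = {t. 0 \<le> t \<and> real k * L / real n \<le> u t}" for k :: nat
    define un where "un t = L / real n * (\<Sum>k\<in>{1..n}. indicator (S k) t)" for t
    have npos: "0 < real n" using n1 by simp
    have pw: "u t - L / real n \<le> un t \<and> un t \<le> u t" if t0: "0 \<le> t" for t
    proof (cases "L = 0")
      case True then show ?thesis using ub[OF t0] by (simp add: un_def)
    next
      case False
      then have Lp: "0 < L" using L0 by simp
      define x where "x = real n * u t / L"
      have x0: "0 \<le> x" and xn: "x \<le> real n" using ub[OF t0] Lp npos
        by (auto simp: x_def field_simps)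
      have eqset: "{1..n} \<inter> {k. t \<in> S k} = {1..nat \<lfloor>x\<rfloor>}"
      proof -
        have "t \<in> S k \<longleftrightarrow> real k \<le> x" for k
          using t0 Lp npos by (auto simp: S_def x_def field_simps)
        moreover have "real k \<le> x \<longleftrightarrow> k \<le> nat \<lfloor>x\<rfloor>" for k
          using x0 by (simp add: le_nat_iff le_floor_iff)
        moreover have "nat \<lfloor>x\<rfloor> \<le> n" using xn x0
          by (simp add: nat_le_iff floor_le_iff)
        ultimately show ?thesis by auto
      qed
      have "(\<Sum>k\<in>{1..n}. indicator (S k) t) = (\<Sum>k\<in>{1..n}. indicator {k. t \<in> S k} k :: real)"
        by (intro sum.cong) (auto split: split_indicator)
      also have "\<dots> = real (card ({1..n} \<inter> {k. t \<in> S k}))" by (subst sum_indicator_eq_card[symmetric]) (simp_all add: of_nat_sum indicator_def)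
      also have "\<dots> = real (nat \<lfloor>x\<rfloor>)" using eqset by simp
      also have "\<dots> = of_int \<lfloor>x\<rfloor>" using x0 by simp
      finally have se: "(\<Sum>k\<in>{1..n}. indicator (S k) t) = (of_int \<lfloor>x\<rfloor> :: real)" .
      have fl1: "x - 1 \<le> of_int \<lfloor>x\<rfloor>" and fl2: "of_int \<lfloor>x\<rfloor> \<le> x" by linarith+
      have c0: "0 \<le> L / real n" using Lp npos by simp
      have "L / real n * (x - 1) \<le> un t" unfolding un_def se by (rule mult_left_mono[OF fl1 c0])
      moreover have "un t \<le> L / real n * x" unfolding un_def se by (rule mult_left_mono[OF fl2 c0])
      ultimately have "L / real n * (x - 1) \<le> un t" "un t \<le> L / real n * x" by auto
      moreover have "L / real n * x = u t" using Lp npos by (simp add: x_def)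
      ultimately show ?thesis by (simp add: right_diff_distrib)
    qed
    have Sm: "S k \<in> sets borel" for k unfolding S_def using um by measurable
    have Ssub: "S k \<subseteq> {0..}" for k by (auto simp: S_def)
    have Sint: "integrable lborel (\<lambda>t. indicator (S k) t * h t)" for k
      using set_integrable_subset[OF hi Sm[unfolded sets_lborel[symmetric]] Ssub[of k]]
      by (simp add: set_integrable_def)
    have Sb: "integral\<^sup>L lborel (\<lambda>t. indicator (S k) t * h t) \<le> \<beta>" for k
      using upset_int[OF hm hi um umono hb b0, of "real k * L / real n"]
      by (simp add: S_def set_lebesgue_integral_def)
    have eq1: "(\<lambda>t. indicator {0..} t * (un t * h t)) = (\<lambda>t. L / real n * (\<Sum>k\<in>{1..n}. indicator (S k) t * h t))"
    proof (rule ext)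
      fix t show "indicator {0..} t * (un t * h t) = L / real n * (\<Sum>k\<in>{1..n}. indicator (S k) t * h t)"
      proof (cases "0 \<le> t")
        case True
        have "un t * h t = L / real n * (\<Sum>k\<in>{1..n}. indicator (S k) t * h t)"
          by (simp only: un_def mult.assoc sum_distrib_right)
        then show ?thesis using True by simp
      next
        case False
        then have "t \<notin> S k" for k using Ssub[of k] by auto
        then show ?thesis using False by (simp add: un_def)
      qed
    qed
    have unint: "integrable lborel (\<lambda>t. indicator {0..} t * (un t * h t))"
      unfolding eq1 by (rule Bochner_Integration.integrable_mult_right, rule Bochner_Integration.integrable_sum, rule Sint)
    have "integral\<^sup>L lborel (\<lambda>t. indicator {0..} t * (un t * h t)) = L / real n * (\<Sum>k\<in>{1..n}. integral\<^sup>L lborel (\<lambda>t. indicator (S k) t * h t))"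
      unfolding eq1 integral_mult_right_zero by (rule arg_cong[where f="\<lambda>z. L / real n * z"], rule Bochner_Integration.integral_sum, rule Sint)
    also have "\<dots> \<le> L / real n * (\<Sum>k\<in>{1..n}. \<beta>)"
      using L0 npos by (intro mult_left_mono sum_mono Sb) auto
    also have "\<dots> = L * \<beta>" using npos by simp
    finally have I1: "integral\<^sup>L lborel (\<lambda>t. indicator {0..} t * (un t * h t)) \<le> L * \<beta>" .
    have "A = integral\<^sup>L lborel (\<lambda>t. indicator {0..} t * (u t * h t))"
      by (simp add: A_def set_lebesgue_integral_def)
    also have "\<dots> \<le> integral\<^sup>L lborel (\<lambda>t. indicator {0..} t * (un t * h t) + L / real n * (indicator {0..} t * \<bar>h t\<bar>))"
    proof (rule integral_mono)
      show "integrable lborel (\<lambda>t. indicator {0..} t * (u t * h t))" by (rule uhi)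
      show "integrable lborel (\<lambda>t. indicator {0..} t * (un t * h t) + L / real n * (indicator {0..} t * \<bar>h t\<bar>))"
        using unint hia by auto
      fix t
      show "indicator {0..} t * (u t * h t) \<le> indicator {0..} t * (un t * h t) + L / real n * (indicator {0..} t * \<bar>h t\<bar>)"
      proof (cases "0 \<le> t")
        case True
        have "u t * h t - un t * h t = (u t - un t) * h t" by (simp add: left_diff_distrib)
        also have "\<dots> \<le> (u t - un t) * \<bar>h t\<bar>" using pw[OF True] by (intro mult_left_mono) auto
        also have "\<dots> \<le> L / real n * \<bar>h t\<bar>" using pw[OF True] by (intro mult_right_mono) auto
        finally show ?thesis using True by simp
      qed simp
    qed
    also have "\<dots> = integral\<^sup>L lborel (\<lambda>t. indicator {0..} t * (un t * h t)) + L / real n * D"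
      using unint hia by (simp add: D_def)
    also have "\<dots> \<le> L * \<beta> + L * D / real n" using I1 by simp
    finally show ?thesis .
  qed
  show ?thesis
  proof (rule ccontr)
    assume "\<not> ?thesis"
    then have gap: "0 < A - L * \<beta>" by (simp add: A_def)
    obtain n :: nat where n: "L * D / (A - L * \<beta>) < real n" using reals_Archimedean2 by blast
    define m where "m = Suc n"
    have m1: "1 \<le> m" and mp: "0 < real m" and nm: "L * D / (A - L * \<beta>) < real m"
      using n by (auto simp: m_def)
    have "L * D < real m * (A - L * \<beta>)" using nm gap by (simp add: field_simps)
    then have "L * D / real m < A - L * \<beta>" using mp by (simp add: field_simps)
    with key[OF m1] show False by simp
  qed
qed



lemma invsq:
  fixes c k :: real
  assumes "0 < c" "0 \<le> k"
  shows "(\<integral>\<^sup>+x. ennreal (k / x\<^sup>2) * indicator {c..} x \<partial>lborel) = ennreal (k / c)"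
proof -
  have "(\<integral>\<^sup>+x. ennreal (k / x\<^sup>2) * indicator {c..} x \<partial>lborel) = ennreal (0 - (\<lambda>x. - (k / x)) c)"
  proof (rule nn_integral_FTC_atLeast)
    show "(\<lambda>x. k / x\<^sup>2) \<in> borel_measurable borel" by measurable
    fix x assume x: "c \<le> x"
    then have "x \<noteq> 0" using assms by auto
    then show "((\<lambda>x. - (k / x)) has_real_derivative k / x\<^sup>2) (at x)"
      by (auto intro!: derivative_eq_intros simp: power2_eq_square field_simps)
    show "0 \<le> k / x\<^sup>2" using assms by simp
  next
    have "((\<lambda>x. k / x) \<longlongrightarrow> 0) at_top"
      by (rule tendsto_divide_0[OF tendsto_const filterlim_at_top_imp_at_infinity[OF filterlim_ident]])
    then show "((\<lambda>x. - (k / x)) \<longlongrightarrow> 0) at_top" using tendsto_minus[of _ 0] by fastforce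
  qed
  then show ?thesis by simp
qed

lemma invlog:
  fixes c b k :: real
  assumes "0 < c" "c \<le> b" "0 \<le> k"
  shows "(\<integral>\<^sup>+x. ennreal (k / x) * indicator {c..b} x \<partial>lborel) = ennreal (k * ln b - k * ln c)"
proof (rule nn_integral_FTC_Icc)
  show "(\<lambda>x. k / x) \<in> borel_measurable borel" by measurable
  fix x assume x: "x \<in> {c..b}"
  then have "0 < x" using assms by auto
  then show "((\<lambda>x. k * ln x) has_real_derivative k / x) (at x)"
    by (auto intro!: derivative_eq_intros simp: field_simps)
  show "0 \<le> k / x" using assms \<open>0 < x\<close> by simp
qed (use assms in auto)

lemma ln_le_div_e: "0 < (y::real) \<Longrightarrow> ln y \<le> y / exp 1"
proof -
  assume y: "0 < y"
  have "ln (y / exp 1) \<le> y / exp 1 - 1" using y by (intro ln_le_minus_one divide_pos_pos) simp_all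
  then show ?thesis using y by (simp add: ln_div)
qed

lemma calc_main:
  fixes r1 r2 a :: real
  assumes p: "0 < r1" "0 < r2" and a: "r1 \<le> a" "r2 \<le> a"
  shows "r1 * r2 / a * (2 * ln a - ln r1 - ln r2 + 1) \<le> (r1 + r2) / exp 1 + (1 - 1 / exp 1) * min r1 r2"
proof -
  have a0: "0 < a" using p a by simp
  define s where "s = sqrt (r1 * r2)"
  define q where "q = exp (1/2::real)"
  have s0: "0 < s" using p by (simp add: s_def)
  have q0: "0 < q" by (simp add: q_def)
  have qq: "q * q = exp 1" by (simp add: q_def flip: exp_add)
  have ss: "s * s = r1 * r2" using p by (simp add: s_def)
  have lns: "2 * ln s = ln r1 + ln r2" using p by (simp add: s_def ln_sqrt ln_mult)
  define y where "y = a / (s * q)"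
  have y0: "0 < y" using a0 s0 q0 by (simp add: y_def)
  have lny: "ln y = ln a - ln s - 1/2" using a0 s0 q0 by (simp add: y_def ln_div ln_mult q_def)
  have "ln y \<le> y - 1" using y0 by (rule ln_le_minus_one)
  then have "2 * ln a - ln r1 - ln r2 + 1 \<le> 2 * y" using lns lny by linarith
  then have "r1 * r2 / a * (2 * ln a - ln r1 - ln r2 + 1) \<le> r1 * r2 / a * (2 * y)"
    using p a0 by (intro mult_left_mono) auto
  also have "\<dots> = 2 * s / q" using a0 s0 q0 ss by (simp add: y_def field_simps)
  also have "\<dots> \<le> max r1 r2 / exp 1 + min r1 r2"
  proof -
    define M where "M = max r1 r2"
    define m where "m = min r1 r2"
    have Mm: "M * m = r1 * r2" by (auto simp: M_def m_def max_def min_def)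
    have M0: "0 \<le> M" "0 \<le> m" using p by (auto simp: M_def m_def)
    have "s = sqrt M * sqrt m" using Mm by (simp add: s_def real_sqrt_mult[symmetric])
    then have "0 \<le> (sqrt M - q * sqrt m)^2" by simp
    also have "(sqrt M - q * sqrt m)^2 = M + m * (q * q) - 2 * s * q"
      using \<open>s = sqrt M * sqrt m\<close> M0 by (simp add: power2_eq_square algebra_simps)
    finally have "2 * s * q \<le> M + m * (q * q)" by simp
    then have "2 * s / q \<le> (M + m * (q * q)) / (q * q)" using q0
      by (simp add: field_simps)
    also have "\<dots> = M / exp 1 + m" using q0 qq by (simp add: field_simps)
    finally show ?thesis by (simp add: M_def m_def)
  qed
  also have "\<dots> = (r1 + r2) / exp 1 + (1 - 1 / exp 1) * min r1 r2"
    by (auto simp: max_def min_def field_simps)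
  finally show ?thesis .
qed



lemma H_gen:
  fixes G :: "real \<Rightarrow> real"
  assumes "G \<in> borel_measurable borel" "\<And>t. 0 \<le> G t \<and> G t \<le> 1"
  shows "ennreal (LINT u:{0..t}|lborel. G u) = (\<integral>\<^sup>+u. ennreal (G u) * indicator {0..t} u \<partial>lborel)"
  using nn_set_eq[OF set_integrable_bounded_fin(1)[of G 0 t]] assms by simp

locale two_set =
  fixes G1 G2 f1 f2 :: "real \<Rightarrow> real" and r1 r2 :: real
  assumes f1m: "f1 \<in> borel_measurable borel" and f2m: "f2 \<in> borel_measurable borel"
    and f1nn: "\<And>x. 0 \<le> f1 x" and f2nn: "\<And>x. 0 \<le> f2 x"
    and G1f: "\<And>t. ennreal (G1 t) = (\<integral>\<^sup>+x. ennreal (f1 x) * indicator {t..} x \<partial>lborel)"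
    and G2f: "\<And>t. ennreal (G2 t) = (\<integral>\<^sup>+x. ennreal (f2 x) * indicator {t..} x \<partial>lborel)"
    and G1b: "\<And>t. 0 \<le> G1 t \<and> G1 t \<le> 1" and G2b: "\<And>t. 0 \<le> G2 t \<and> G2 t \<le> 1"
    and G1a: "\<And>s t. s \<le> t \<Longrightarrow> G1 t \<le> G1 s" and G2a: "\<And>s t. s \<le> t \<Longrightarrow> G2 t \<le> G2 s"
    and G1r: "\<And>t. 0 \<le> t \<Longrightarrow> t * G1 t \<le> r1" and G2r: "\<And>t. 0 \<le> t \<Longrightarrow> t * G2 t \<le> r2"
    and r1p: "0 < r1" and r2p: "0 < r2"
begin

definition "H1 t = (LINT u:{0..t}|lborel. G1 u)"
definition "H2 t = (LINT u:{0..t}|lborel. G2 u)"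
definition "C t = G1 t * G2 t"
definition "P1 t = f2 t * max 0 (H1 t - r1)"
definition "P2 t = f1 t * max 0 (H2 t - r2)"

lemma G1m[measurable]: "G1 \<in> borel_measurable borel"
proof -
  have "mono (\<lambda>t. - G1 t)" by (auto intro!: monoI simp: G1a)
  then have "(\<lambda>t. - (- G1 t)) \<in> borel_measurable borel" by (intro borel_measurable_uminus borel_measurable_mono)
  then show ?thesis by simp
qed

lemma G2m[measurable]: "G2 \<in> borel_measurable borel"
proof -
  have "mono (\<lambda>t. - G2 t)" by (auto intro!: monoI simp: G2a)
  then have "(\<lambda>t. - (- G2 t)) \<in> borel_measurable borel" by (intro borel_measurable_uminus borel_measurable_mono)
  then show ?thesis by simp
qed

declare f1m[measurable] f2m[measurable]

lemma G1_le: "0 < t \<Longrightarrow> G1 t \<le> r1 / t"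
  using G1r[of t] by (simp add: field_simps)
lemma G2_le: "0 < t \<Longrightarrow> G2 t \<le> r2 / t"
  using G2r[of t] by (simp add: field_simps)

lemma H1e: "ennreal (H1 t) = (\<integral>\<^sup>+u. ennreal (G1 u) * indicator {0..t} u \<partial>lborel)"
  unfolding H1_def by (rule H_gen) (use G1b in auto)
lemma H2e: "ennreal (H2 t) = (\<integral>\<^sup>+u. ennreal (G2 u) * indicator {0..t} u \<partial>lborel)"
  unfolding H2_def by (rule H_gen) (use G2b in auto)

lemma H1nn: "0 \<le> H1 t"
  unfolding H1_def set_lebesgue_integral_def using G1b by (intro integral_nonneg_AE AE_I2) simp
lemma H2nn: "0 \<le> H2 t"
  unfolding H2_def set_lebesgue_integral_def using G2b by (intro integral_nonneg_AE AE_I2) simp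

lemma H1mono: "mono H1"
proof (rule monoI)
  fix s t :: real assume "s \<le> t"
  then have "(\<integral>\<^sup>+u. ennreal (G1 u) * indicator {0..s} u \<partial>lborel) \<le> (\<integral>\<^sup>+u. ennreal (G1 u) * indicator {0..t} u \<partial>lborel)"
    by (intro nn_integral_mono) (auto split: split_indicator)
  then show "H1 s \<le> H1 t" using H1nn[of t] by (simp add: H1e[symmetric])
qed
lemma H2mono: "mono H2"
proof (rule monoI)
  fix s t :: real assume "s \<le> t"
  then have "(\<integral>\<^sup>+u. ennreal (G2 u) * indicator {0..s} u \<partial>lborel) \<le> (\<integral>\<^sup>+u. ennreal (G2 u) * indicator {0..t} u \<partial>lborel)"
    by (intro nn_integral_mono) (auto split: split_indicator)
  then show "H2 s \<le> H2 t" using H2nn[of t] by (simp add: H2e[symmetric])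
qed

lemma H1m[measurable]: "H1 \<in> borel_measurable borel" by (rule borel_measurable_mono[OF H1mono])
lemma H2m[measurable]: "H2 \<in> borel_measurable borel" by (rule borel_measurable_mono[OF H2mono])

lemma Cm[measurable]: "C \<in> borel_measurable borel" unfolding C_def by measurable
lemma P1m[measurable]: "P1 \<in> borel_measurable borel" unfolding P1_def by measurable
lemma P2m[measurable]: "P2 \<in> borel_measurable borel" unfolding P2_def by measurable

lemma Cnn: "0 \<le> C t" using G1b G2b by (simp add: C_def)
lemma P1nn: "0 \<le> P1 t" using f2nn by (simp add: P1_def)
lemma P2nn: "0 \<le> P2 t" using f1nn by (simp add: P2_def)

end


lemma H_split_gen:
  fixes G :: "real \<Rightarrow> real" and r t :: real
  assumes Gm: "G \<in> borel_measurable borel" and Gb: "\<And>t. 0 \<le> G t \<and> G t \<le> 1"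
    and r: "0 < r" and t: "0 \<le> t"
  shows "ennreal (max 0 ((LINT u:{0..t}|lborel. G u) - r)) \<le> (\<integral>\<^sup>+u. ennreal (G u) * indicator {r..t} u \<partial>lborel)"
proof (cases "t < r")
  case True
  have "ennreal (LINT u:{0..t}|lborel. G u) = (\<integral>\<^sup>+u. ennreal (G u) * indicator {0..t} u \<partial>lborel)"
    by (rule H_gen[OF Gm Gb])
  also have "\<dots> \<le> (\<integral>\<^sup>+u. indicator {0..t} u \<partial>lborel)"
    using Gb by (intro nn_integral_mono) (auto split: split_indicator)
  also have "\<dots> = ennreal t" using t by simp
  finally have "(LINT u:{0..t}|lborel. G u) \<le> t" using t by (simp add: ennreal_le_iff)
  then show ?thesis using True by simp
next
  case False
  define x where "x = (LINT u:{r..t}|lborel. G u)"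
  have xi: "set_integrable lborel {r..t} G" by (rule set_integrable_bounded_fin(1)) (use Gm Gb in auto)
  have xe: "(\<integral>\<^sup>+u. ennreal (G u) * indicator {r..t} u \<partial>lborel) = ennreal x"
    unfolding x_def by (rule nn_set_eq[OF xi]) (use Gb in auto)
  have x0: "0 \<le> x" unfolding x_def set_lebesgue_integral_def using Gb by (intro integral_nonneg_AE AE_I2) simp
  have "ennreal (LINT u:{0..t}|lborel. G u) = (\<integral>\<^sup>+u. ennreal (G u) * indicator {0..t} u \<partial>lborel)"
    by (rule H_gen[OF Gm Gb])
  also have "\<dots> = (\<integral>\<^sup>+u. ennreal (G u) * indicator {0..<r} u + ennreal (G u) * indicator {r..t} u \<partial>lborel)"
    using r False by (intro nn_integral_cong) (auto split: split_indicator)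
  also have "\<dots> = (\<integral>\<^sup>+u. ennreal (G u) * indicator {0..<r} u \<partial>lborel) + (\<integral>\<^sup>+u. ennreal (G u) * indicator {r..t} u \<partial>lborel)"
    by (rule nn_integral_add) (use Gm in auto)
  also have "\<dots> \<le> (\<integral>\<^sup>+u. indicator {0..<r} u \<partial>lborel) + ennreal x"
    unfolding xe using Gb by (intro add_mono nn_integral_mono) (auto split: split_indicator)
  also have "\<dots> = ennreal (r + x)" using r x0 by (simp add: ennreal_plus)
  finally have "ennreal (LINT u:{0..t}|lborel. G u) \<le> ennreal (r + x)" .
  then have "(LINT u:{0..t}|lborel. G u) \<le> r + x" using r x0 by (subst (asm) ennreal_le_iff) auto
  then have "max 0 ((LINT u:{0..t}|lborel. G u) - r) \<le> x" using x0 by simp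
  then show ?thesis unfolding xe by (simp add: ennreal_leI)
qed

lemma tonelli_gen:
  fixes Ga Gb fb :: "real \<Rightarrow> real" and r a :: real
  assumes Gam: "Ga \<in> borel_measurable borel" and Gab: "\<And>t. 0 \<le> Ga t \<and> Ga t \<le> 1"
    and fbm: "fb \<in> borel_measurable borel" and fbnn: "\<And>x. 0 \<le> fb x"
    and Gbf: "\<And>t. ennreal (Gb t) = (\<integral>\<^sup>+x. ennreal (fb x) * indicator {t..} x \<partial>lborel)"
    and Gbnn: "\<And>t. 0 \<le> Gb t" and Gbm: "Gb \<in> borel_measurable borel"
    and r: "0 < r" and a: "0 \<le> a"
  shows "(\<integral>\<^sup>+t. ennreal (fb t * max 0 ((LINT u:{0..t}|lborel. Ga u) - r)) * indicator {a..} t \<partial>lborel)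
    \<le> ennreal (Gb a) * (\<integral>\<^sup>+u. ennreal (Ga u) * indicator {r..<a} u \<partial>lborel)
      + (\<integral>\<^sup>+u. ennreal (Ga u * Gb u) * indicator {max a r..} u \<partial>lborel)"
proof -
  define F where "F t u = ennreal (fb t) * indicator {a..} t * (ennreal (Ga u) * (if r \<le> u \<and> u \<le> t then 1 else 0))" for t u
  have Fm: "(\<lambda>(t, u). F t u) \<in> borel_measurable (lborel \<Otimes>\<^sub>M lborel)"
    unfolding F_def using Gam fbm by measurable
  have "(\<integral>\<^sup>+t. ennreal (fb t * max 0 ((LINT u:{0..t}|lborel. Ga u) - r)) * indicator {a..} t \<partial>lborel)
      \<le> (\<integral>\<^sup>+t. ennreal (fb t) * indicator {a..} t * (\<integral>\<^sup>+u. ennreal (Ga u) * (if r \<le> u \<and> u \<le> t then 1 else 0) \<partial>lborel) \<partial>lborel)"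
  proof (intro nn_integral_mono)
    fix t
    show "ennreal (fb t * max 0 ((LINT u:{0..t}|lborel. Ga u) - r)) * indicator {a..} t
      \<le> ennreal (fb t) * indicator {a..} t * (\<integral>\<^sup>+u. ennreal (Ga u) * (if r \<le> u \<and> u \<le> t then 1 else 0) \<partial>lborel)"
    proof (cases "a \<le> t")
      case True
      have eqi: "(\<integral>\<^sup>+u. ennreal (Ga u) * (if r \<le> u \<and> u \<le> t then 1 else 0) \<partial>lborel) = (\<integral>\<^sup>+u. ennreal (Ga u) * indicator {r..t} u \<partial>lborel)"
        by (intro nn_integral_cong) (auto split: split_indicator)
      have "ennreal (fb t * max 0 ((LINT u:{0..t}|lborel. Ga u) - r)) = ennreal (fb t) * ennreal (max 0 ((LINT u:{0..t}|lborel. Ga u) - r))"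
        using fbnn by (simp add: ennreal_mult)
      also have "\<dots> \<le> ennreal (fb t) * (\<integral>\<^sup>+u. ennreal (Ga u) * indicator {r..t} u \<partial>lborel)"
        using H_split_gen[OF Gam Gab r, of t] True a by (intro mult_left_mono) auto
      finally show ?thesis using True eqi by simp
    qed simp
  qed
  also have "\<dots> = (\<integral>\<^sup>+t. \<integral>\<^sup>+u. F t u \<partial>lborel \<partial>lborel)"
    unfolding F_def by (intro nn_integral_cong nn_integral_cmult[symmetric]) (use Gam in measurable)
  also have "\<dots> = (\<integral>\<^sup>+u. \<integral>\<^sup>+t. F t u \<partial>lborel \<partial>lborel)"
    by (rule lborel_pair.Fubini'[symmetric]) (use Fm in simp)
  also have "\<dots> = (\<integral>\<^sup>+u. ennreal (Ga u) * indicator {r..} u * ennreal (Gb (max a u)) \<partial>lborel)"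
  proof (intro nn_integral_cong)
    fix u
    have "(\<integral>\<^sup>+t. F t u \<partial>lborel) = (\<integral>\<^sup>+t. (ennreal (Ga u) * indicator {r..} u) * (ennreal (fb t) * indicator {max a u..} t) \<partial>lborel)"
      unfolding F_def by (intro nn_integral_cong) (auto split: split_indicator simp: ac_simps)
    also have "\<dots> = ennreal (Ga u) * indicator {r..} u * (\<integral>\<^sup>+t. ennreal (fb t) * indicator {max a u..} t \<partial>lborel)"
      by (rule nn_integral_cmult) (use fbm in measurable)
    also have "\<dots> = ennreal (Ga u) * indicator {r..} u * ennreal (Gb (max a u))" by (simp add: Gbf)
    finally show "(\<integral>\<^sup>+t. F t u \<partial>lborel) = ennreal (Ga u) * indicator {r..} u * ennreal (Gb (max a u))" .
  qed
  also have "\<dots> = (\<integral>\<^sup>+u. ennreal (Gb a) * (ennreal (Ga u) * indicator {r..<a} u) + ennreal (Ga u * Gb u) * indicator {max a r..} u \<partial>lborel)"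
  proof (intro nn_integral_cong)
    fix u
    show "ennreal (Ga u) * indicator {r..} u * ennreal (Gb (max a u)) = ennreal (Gb a) * (ennreal (Ga u) * indicator {r..<a} u) + ennreal (Ga u * Gb u) * indicator {max a r..} u"
    proof (cases "r \<le> u")
      case True
      then show ?thesis using Gab Gbnn
        by (cases "u < a") (auto simp: max_def ennreal_mult mult.commute split: split_indicator)
    qed (auto split: split_indicator)
  qed
  also have "\<dots> = ennreal (Gb a) * (\<integral>\<^sup>+u. ennreal (Ga u) * indicator {r..<a} u \<partial>lborel)
      + (\<integral>\<^sup>+u. ennreal (Ga u * Gb u) * indicator {max a r..} u \<partial>lborel)"
    using Gam Gbm by (subst nn_integral_add) (auto intro!: nn_integral_cmult)
  finally show ?thesis .
qed



context two_set begin

lemma C_le: "0 < t \<Longrightarrow> C t \<le> r1 * r2 / t\<^sup>2"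
proof -
  assume t: "0 < t"
  have "G1 t * G2 t \<le> (r1 / t) * (r2 / t)"
    using G1_le[OF t] G2_le[OF t] G1b G2b t r1p by (intro mult_mono) auto
  then show ?thesis by (simp add: C_def power2_eq_square)
qed

lemma C_le1: "C t \<le> 1"
  using G1b[of t] G2b[of t] unfolding C_def by (metis mult_le_one)

lemma C_tail_nn: "0 < c \<Longrightarrow> (\<integral>\<^sup>+u. ennreal (C u) * indicator {c..} u \<partial>lborel) \<le> ennreal (r1 * r2 / c)"
proof -
  assume c: "0 < c"
  have "(\<integral>\<^sup>+u. ennreal (C u) * indicator {c..} u \<partial>lborel) \<le> (\<integral>\<^sup>+u. ennreal (r1 * r2 / u\<^sup>2) * indicator {c..} u \<partial>lborel)"
  proof (intro nn_integral_mono)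
    fix u show "ennreal (C u) * indicator {c..} u \<le> ennreal (r1 * r2 / u\<^sup>2) * indicator {c..} u"
      using C_le[of u] c by (auto split: split_indicator intro!: ennreal_leI)
  qed
  also have "\<dots> = ennreal (r1 * r2 / c)" using c r1p r2p by (intro invsq) auto
  finally show ?thesis .
qed

lemma C_int: "set_integrable lborel {0..} C"
proof (rule set_integrable_nn)
  have "(\<integral>\<^sup>+u. ennreal (C u) * indicator {0..} u \<partial>lborel) \<le> (\<integral>\<^sup>+u. indicator {0..<r1} u + ennreal (C u) * indicator {r1..} u \<partial>lborel)"
  proof (intro nn_integral_mono)
    fix u show "ennreal (C u) * indicator {0..} u \<le> indicator {0..<r1} u + ennreal (C u) * indicator {r1..} u"
      using C_le1[of u] by (auto split: split_indicator)
  qed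
  also have "\<dots> = (\<integral>\<^sup>+u. indicator {0..<r1} u \<partial>lborel) + (\<integral>\<^sup>+u. ennreal (C u) * indicator {r1..} u \<partial>lborel)"
    by (rule nn_integral_add) auto
  also have "\<dots> \<le> ennreal r1 + ennreal (r1 * r2 / r1)"
    using C_tail_nn[OF r1p] r1p by (intro add_mono) auto
  also have "\<dots> < \<infinity>" by simp
  finally show "(\<integral>\<^sup>+u. ennreal (C u) * indicator {0..} u \<partial>lborel) < \<infinity>" .
qed (auto simp: Cnn)

lemma C_int': "0 \<le> c \<Longrightarrow> set_integrable lborel {c..} C"
  by (rule set_integrable_subset[OF C_int]) auto

lemma C_nn_eq: "0 \<le> c \<Longrightarrow> (\<integral>\<^sup>+u. ennreal (C u) * indicator {c..} u \<partial>lborel) = ennreal (LINT u:{c..}|lborel. C u)"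
  by (rule nn_set_eq[OF C_int']) (auto simp: Cnn)

lemma C_tail: "0 < c \<Longrightarrow> (LINT u:{c..}|lborel. C u) \<le> r1 * r2 / c"
proof -
  assume c: "0 < c"
  have "ennreal (LINT u:{c..}|lborel. C u) \<le> ennreal (r1 * r2 / c)"
    using C_tail_nn[OF c] C_nn_eq[of c] c by simp
  then show ?thesis using c r1p r2p by (subst (asm) ennreal_le_iff) auto
qed

lemma C_anti: "0 \<le> a \<Longrightarrow> a \<le> b \<Longrightarrow> (LINT u:{b..}|lborel. C u) \<le> (LINT u:{a..}|lborel. C u)"
proof -
  assume ab: "0 \<le> a" "a \<le> b"
  have "(\<integral>\<^sup>+u. ennreal (C u) * indicator {b..} u \<partial>lborel) \<le> (\<integral>\<^sup>+u. ennreal (C u) * indicator {a..} u \<partial>lborel)"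
    using ab by (intro nn_integral_mono) (auto split: split_indicator)
  then have "ennreal (LINT u:{b..}|lborel. C u) \<le> ennreal (LINT u:{a..}|lborel. C u)"
    using C_nn_eq[of a] C_nn_eq[of b] ab by simp
  moreover have "0 \<le> (LINT u:{a..}|lborel. C u)"
    unfolding set_lebesgue_integral_def by (intro integral_nonneg_AE AE_I2) (simp add: Cnn)
  ultimately show ?thesis by (subst (asm) ennreal_le_iff) auto
qed

lemma C_int_nn: "0 \<le> (LINT u:A|lborel. C u)"
  unfolding set_lebesgue_integral_def by (intro integral_nonneg_AE AE_I2) (simp add: Cnn)

lemma G1_int_nn: "0 \<le> (LINT u:A|lborel. G1 u)"
  unfolding set_lebesgue_integral_def using G1b by (intro integral_nonneg_AE AE_I2) simp
lemma G2_int_nn: "0 \<le> (LINT u:A|lborel. G2 u)"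
  unfolding set_lebesgue_integral_def using G2b by (intro integral_nonneg_AE AE_I2) simp

lemma P1_bound:
  assumes a: "0 \<le> a"
  shows "set_integrable lborel {a..} P1 \<and> (LINT t:{a..}|lborel. P1 t) \<le> G2 a * (LINT u:{r1..<a}|lborel. G1 u) + (LINT u:{max a r1..}|lborel. C u)"
proof -
  define x1 where "x1 = (LINT u:{r1..<a}|lborel. G1 u)"
  define x2 where "x2 = (LINT u:{max a r1..}|lborel. C u)"
  have e1: "(\<integral>\<^sup>+u. ennreal (G1 u) * indicator {r1..<a} u \<partial>lborel) = ennreal x1"
    unfolding x1_def by (rule nn_set_eq[OF set_integrable_bounded_fin(2)]) (use G1b in auto)
  have e2: "(\<integral>\<^sup>+u. ennreal (G1 u * G2 u) * indicator {max a r1..} u \<partial>lborel) = ennreal x2"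
    unfolding x2_def using C_nn_eq[of "max a r1"] a by (simp add: C_def[abs_def])
  have x10: "0 \<le> x1" unfolding x1_def by (rule G1_int_nn)
  have x20: "0 \<le> x2" unfolding x2_def by (rule C_int_nn)
  have T: "(\<integral>\<^sup>+t. ennreal (P1 t) * indicator {a..} t \<partial>lborel) \<le> ennreal (G2 a * x1 + x2)"
  proof -
    have "(\<integral>\<^sup>+t. ennreal (P1 t) * indicator {a..} t \<partial>lborel)
      \<le> ennreal (G2 a) * (\<integral>\<^sup>+u. ennreal (G1 u) * indicator {r1..<a} u \<partial>lborel)
      + (\<integral>\<^sup>+u. ennreal (G1 u * G2 u) * indicator {max a r1..} u \<partial>lborel)"
      unfolding P1_def H1_def
      by (rule tonelli_gen[OF G1m G1b f2m f2nn G2f _ G2m r1p a]) (use G2b in auto)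
    also have "\<dots> = ennreal (G2 a * x1 + x2)"
      unfolding e1 e2 using G2b[of a] x10 x20 by (simp add: ennreal_mult ennreal_plus)
    finally show ?thesis .
  qed
  have si: "set_integrable lborel {a..} P1"
    by (rule set_integrable_nn) (use T P1nn in \<open>auto intro: le_less_trans\<close>)
  have "ennreal (LINT t:{a..}|lborel. P1 t) \<le> ennreal (G2 a * x1 + x2)"
    using T nn_set_eq[OF si] P1nn by simp
  then have "(LINT t:{a..}|lborel. P1 t) \<le> G2 a * x1 + x2"
    using G2b[of a] x10 x20 by (subst (asm) ennreal_le_iff) auto
  then show ?thesis using si unfolding x1_def x2_def by simp
qed

lemma P2_bound:
  assumes a: "0 \<le> a"
  shows "set_integrable lborel {a..} P2 \<and> (LINT t:{a..}|lborel. P2 t) \<le> G1 a * (LINT u:{r2..<a}|lborel. G2 u) + (LINT u:{max a r2..}|lborel. C u)"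
proof -
  define x1 where "x1 = (LINT u:{r2..<a}|lborel. G2 u)"
  define x2 where "x2 = (LINT u:{max a r2..}|lborel. C u)"
  have e1: "(\<integral>\<^sup>+u. ennreal (G2 u) * indicator {r2..<a} u \<partial>lborel) = ennreal x1"
    unfolding x1_def by (rule nn_set_eq[OF set_integrable_bounded_fin(2)]) (use G2b in auto)
  have e2: "(\<integral>\<^sup>+u. ennreal (G2 u * G1 u) * indicator {max a r2..} u \<partial>lborel) = ennreal x2"
    unfolding x2_def using C_nn_eq[of "max a r2"] a by (simp add: C_def[abs_def] mult.commute)
  have x10: "0 \<le> x1" unfolding x1_def by (rule G2_int_nn)
  have x20: "0 \<le> x2" unfolding x2_def by (rule C_int_nn)
  have T: "(\<integral>\<^sup>+t. ennreal (P2 t) * indicator {a..} t \<partial>lborel) \<le> ennreal (G1 a * x1 + x2)"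
  proof -
    have "(\<integral>\<^sup>+t. ennreal (P2 t) * indicator {a..} t \<partial>lborel)
      \<le> ennreal (G1 a) * (\<integral>\<^sup>+u. ennreal (G2 u) * indicator {r2..<a} u \<partial>lborel)
      + (\<integral>\<^sup>+u. ennreal (G2 u * G1 u) * indicator {max a r2..} u \<partial>lborel)"
      unfolding P2_def H2_def
      by (rule tonelli_gen[OF G2m G2b f1m f1nn G1f _ G1m r2p a]) (use G1b in auto)
    also have "\<dots> = ennreal (G1 a * x1 + x2)"
      unfolding e1 e2 using G1b[of a] x10 x20 by (simp add: ennreal_mult ennreal_plus)
    finally show ?thesis .
  qed
  have si: "set_integrable lborel {a..} P2"
    by (rule set_integrable_nn) (use T P2nn in \<open>auto intro: le_less_trans\<close>)
  have "ennreal (LINT t:{a..}|lborel. P2 t) \<le> ennreal (G1 a * x1 + x2)"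
    using T nn_set_eq[OF si] P2nn by simp
  then have "(LINT t:{a..}|lborel. P2 t) \<le> G1 a * x1 + x2"
    using G1b[of a] x10 x20 by (subst (asm) ennreal_le_iff) auto
  then show ?thesis using si unfolding x1_def x2_def by simp
qed

end


lemma Tgen:
  fixes Ga Gb :: "real \<Rightarrow> real" and ra rb a :: real
  assumes Gam: "Ga \<in> borel_measurable borel" and Gab: "\<And>t. 0 \<le> Ga t \<and> Ga t \<le> 1"
    and Gbb: "\<And>t. 0 \<le> Gb t" and Gale: "\<And>t. 0 < t \<Longrightarrow> Ga t \<le> ra / t"
    and Gble: "\<And>t. 0 < t \<Longrightarrow> Gb t \<le> rb / t"
    and ra: "0 < ra" and rb: "0 < rb" and a: "0 \<le> a"
  shows "Gb a * (LINT u:{ra..<a}|lborel. Ga u) \<le> rb / exp 1"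
    and "ra \<le> a \<Longrightarrow> Gb a * (LINT u:{ra..<a}|lborel. Ga u) \<le> rb / a * (ra * (ln a - ln ra))"
proof -
  have nn: "0 \<le> (LINT u:{ra..<a}|lborel. Ga u)"
    unfolding set_lebesgue_integral_def using Gab by (intro integral_nonneg_AE AE_I2) simp
  have main: "Gb a * (LINT u:{ra..<a}|lborel. Ga u) \<le> rb / a * (ra * (ln a - ln ra))" if ara: "ra \<le> a"
  proof -
    have a0: "0 < a" using ara ra by simp
    have si: "set_integrable lborel {ra..<a} Ga" by (rule set_integrable_bounded_fin(2)) (use Gam Gab in auto)
    have "ennreal (LINT u:{ra..<a}|lborel. Ga u) = (\<integral>\<^sup>+u. ennreal (Ga u) * indicator {ra..<a} u \<partial>lborel)"
      by (rule nn_set_eq[OF si, symmetric]) (use Gab in auto)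
    also have "\<dots> \<le> (\<integral>\<^sup>+u. ennreal (ra / u) * indicator {ra..a} u \<partial>lborel)"
    proof (intro nn_integral_mono)
      fix u show "ennreal (Ga u) * indicator {ra..<a} u \<le> ennreal (ra / u) * indicator {ra..a} u"
        using Gale[of u] ra by (auto split: split_indicator intro!: ennreal_leI)
    qed
    also have "\<dots> = ennreal (ra * ln a - ra * ln ra)" using ra ara by (intro invlog) auto
    finally have "(LINT u:{ra..<a}|lborel. Ga u) \<le> ra * (ln a - ln ra)"
      using ra ara by (subst (asm) ennreal_le_iff) (auto simp: right_diff_distrib)
    then show ?thesis using Gble[OF a0] Gbb[of a] nn by (intro mult_mono) auto
  qed
  then show "ra \<le> a \<Longrightarrow> Gb a * (LINT u:{ra..<a}|lborel. Ga u) \<le> rb / a * (ra * (ln a - ln ra))" .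
  show "Gb a * (LINT u:{ra..<a}|lborel. Ga u) \<le> rb / exp 1"
  proof (cases "ra \<le> a")
    case True
    have a0: "0 < a" using True ra by simp
    have "ln (a / ra) \<le> (a / ra) / exp 1" using a0 ra by (intro ln_le_div_e) simp
    then have "ra * (ln a - ln ra) \<le> ra * ((a / ra) / exp 1)" using a0 ra
      by (intro mult_left_mono) (auto simp: ln_div)
    also have "\<dots> = a / exp 1" using ra by simp
    finally have "rb / a * (ra * (ln a - ln ra)) \<le> rb / a * (a / exp 1)" using rb a0
      by (intro mult_left_mono) auto
    also have "\<dots> = rb / exp 1" using a0 by simp
    finally show ?thesis using main[OF True] by simp
  next
    case False
    then have "{ra..<a} = {}" by auto
    then show ?thesis using rb by (simp add: set_lebesgue_integral_def)
  qed
qed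

context two_set begin

lemma T1: "0 \<le> a \<Longrightarrow> G2 a * (LINT u:{r1..<a}|lborel. G1 u) \<le> r2 / exp 1"
  "0 \<le> a \<Longrightarrow> r1 \<le> a \<Longrightarrow> G2 a * (LINT u:{r1..<a}|lborel. G1 u) \<le> r2 / a * (r1 * (ln a - ln r1))"
  using Tgen[OF G1m G1b _ G1_le G2_le r1p r2p] G2b by auto

lemma T2: "0 \<le> a \<Longrightarrow> G1 a * (LINT u:{r2..<a}|lborel. G2 u) \<le> r1 / exp 1"
  "0 \<le> a \<Longrightarrow> r2 \<le> a \<Longrightarrow> G1 a * (LINT u:{r2..<a}|lborel. G2 u) \<le> r1 / a * (r2 * (ln a - ln r2))"
  using Tgen[OF G2m G2b _ G2_le G1_le r2p r1p] G1b by auto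

lemma T1z: "a < r1 \<Longrightarrow> G2 a * (LINT u:{r1..<a}|lborel. G1 u) = 0"
proof -
  assume "a < r1" then have "{r1..<a} = {}" by auto
  then show ?thesis by (simp add: set_lebesgue_integral_def)
qed
lemma T2z: "a < r2 \<Longrightarrow> G1 a * (LINT u:{r2..<a}|lborel. G2 u) = 0"
proof -
  assume "a < r2" then have "{r2..<a} = {}" by auto
  then show ?thesis by (simp add: set_lebesgue_integral_def)
qed

lemma R_int: "0 \<le> a \<Longrightarrow> set_integrable lborel {a..} (\<lambda>t. P1 t + P2 t - C t)"
  using P1_bound P2_bound C_int' by (intro set_integral_diff(1) set_integral_add(1)) auto

lemma R2_int: "0 \<le> a \<Longrightarrow> set_integrable lborel {a..} (\<lambda>t. P2 t - C t)"
  using P2_bound C_int' by (intro set_integral_diff(1)) auto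

lemma R_bound:
  assumes a: "0 \<le> a"
  shows "(LINT t:{a..}|lborel. P1 t + P2 t - C t) \<le> (r1 + r2) / exp 1 + (1 - 1 / exp 1) * min r1 r2"
proof -
  define T1v where "T1v = G2 a * (LINT u:{r1..<a}|lborel. G1 u)"
  define T2v where "T2v = G1 a * (LINT u:{r2..<a}|lborel. G2 u)"
  define L where "L b = (LINT u:{b..}|lborel. C u)" for b
  have eq: "(LINT t:{a..}|lborel. P1 t + P2 t - C t) = (LINT t:{a..}|lborel. P1 t) + (LINT t:{a..}|lborel. P2 t) - L a"
    using P1_bound[OF a] P2_bound[OF a] C_int'[OF a] unfolding L_def
    by (simp add: set_integral_diff set_integral_add)
  have b1: "(LINT t:{a..}|lborel. P1 t) \<le> T1v + L (max a r1)" using P1_bound[OF a] by (simp add: T1v_def L_def)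
  have b2: "(LINT t:{a..}|lborel. P2 t) \<le> T2v + L (max a r2)" using P2_bound[OF a] by (simp add: T2v_def L_def)
  show ?thesis
  proof (cases "r1 \<le> a \<and> r2 \<le> a")
    case True
    then have a0: "0 < a" using r1p by auto
    have "(LINT t:{a..}|lborel. P1 t + P2 t - C t) \<le> T1v + T2v + L a"
    proof -
      have "max a r1 = a" "max a r2 = a" using True by auto
      then show ?thesis using eq b1 b2 by simp
    qed
    also have "\<dots> \<le> r2 / a * (r1 * (ln a - ln r1)) + r1 / a * (r2 * (ln a - ln r2)) + r1 * r2 / a"
      using T1(2)[OF a] T2(2)[OF a] True C_tail[OF a0]
      unfolding T1v_def T2v_def L_def by (intro add_mono) auto
    also have "\<dots> = r1 * r2 / a * (2 * ln a - ln r1 - ln r2 + 1)" using a0 by (simp add: field_simps)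
    also have "\<dots> \<le> (r1 + r2) / exp 1 + (1 - 1 / exp 1) * min r1 r2"
      using True r1p r2p by (intro calc_main) auto
    finally show ?thesis .
  next
    case False
    show ?thesis
    proof (cases "r1 \<le> r2")
      case True
      then have ar2: "a < r2" using False by auto
      have "L (max a r1) \<le> L a" unfolding L_def using a by (intro C_anti) auto
      then have "(LINT t:{a..}|lborel. P1 t + P2 t - C t) \<le> T1v + T2v + L r2"
      proof -
        have "max a r2 = r2" using ar2 by auto
        then show ?thesis using eq b1 b2 \<open>L (max a r1) \<le> L a\<close> by simp
      qed
      also have "\<dots> \<le> r2 / exp 1 + 0 + r1 * r2 / r2"
        using T1(1)[OF a] T2z[OF ar2] C_tail[OF r2p] unfolding T1v_def T2v_def L_def by (intro add_mono) auto
      also have "\<dots> = (r1 + r2) / exp 1 + (1 - 1 / exp 1) * min r1 r2"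
        using True r2p by (simp add: min_def field_simps)
      finally show ?thesis .
    next
      case False2: False
      then have ar1: "a < r1" using False by auto
      have "L (max a r2) \<le> L a" unfolding L_def using a by (intro C_anti) auto
      then have "(LINT t:{a..}|lborel. P1 t + P2 t - C t) \<le> T1v + T2v + L r1"
      proof -
        have "max a r1 = r1" using ar1 by auto
        then show ?thesis using eq b1 b2 \<open>L (max a r2) \<le> L a\<close> by simp
      qed
      also have "\<dots> \<le> 0 + r1 / exp 1 + r1 * r2 / r1"
        using T2(1)[OF a] T1z[OF ar1] C_tail[OF r1p] unfolding T1v_def T2v_def L_def by (intro add_mono) auto
      also have "\<dots> = (r1 + r2) / exp 1 + (1 - 1 / exp 1) * min r1 r2"
        using False2 r1p by (simp add: min_def field_simps)
      finally show ?thesis .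
    qed
  qed
qed

lemma R2_bound:
  assumes a: "0 \<le> a"
  shows "(LINT t:{a..}|lborel. P2 t - C t) \<le> r1 / exp 1"
proof -
  have eq: "(LINT t:{a..}|lborel. P2 t - C t) = (LINT t:{a..}|lborel. P2 t) - (LINT t:{a..}|lborel. C t)"
    using P2_bound[OF a] C_int'[OF a] by (simp add: set_integral_diff)
  have "(LINT t:{max a r2..}|lborel. C t) \<le> (LINT t:{a..}|lborel. C t)" using a by (intro C_anti) auto
  then have "(LINT t:{a..}|lborel. P2 t - C t) \<le> G1 a * (LINT u:{r2..<a}|lborel. G2 u)"
    using eq P2_bound[OF a] by simp
  also have "\<dots> \<le> r1 / exp 1" by (rule T2(1)[OF a])
  finally show ?thesis .
qed

end


lemma set_integrable_bdd_mult:
  fixes h u :: "real \<Rightarrow> real"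
  assumes hi: "set_integrable lborel {0..} h" and hm: "h \<in> borel_measurable borel"
    and um: "u \<in> borel_measurable borel" and ub: "\<And>t. 0 \<le> t \<Longrightarrow> \<bar>u t\<bar> \<le> K"
  shows "set_integrable lborel {0..} (\<lambda>t. u t * h t)"
proof (rule set_integrable_bound[where f="\<lambda>t. K * h t"])
  show "set_integrable lborel {0..} (\<lambda>t. K * h t)" using hi by simp
  show "set_borel_measurable lborel {0..} (\<lambda>t. u t * h t)"
    unfolding set_borel_measurable_def using hm um by simp
  show "AE x\<in>{0..} in lborel. norm (u x * h x) \<le> norm (K * h x)"
  proof (rule AE_I2, rule impI)
    fix x :: real assume "x \<in> {0..}"
    then have "\<bar>u x\<bar> \<le> \<bar>K\<bar>" using ub[of x] by simp
    then have "\<bar>u x\<bar> * \<bar>h x\<bar> \<le> \<bar>K\<bar> * \<bar>h x\<bar>" by (rule mult_right_mono) simp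
    then show "norm (u x * h x) \<le> norm (K * h x)" by (simp add: abs_mult)
  qed
qed

context two_set begin

lemma main_abs:
  fixes \<phi>1 \<phi>2 :: "real \<Rightarrow> real" and l1 l2 :: real
  assumes l: "0 < l1" "l1 \<le> l2"
    and m1: "\<phi>1 \<in> borel_measurable borel" and m2: "\<phi>2 \<in> borel_measurable borel"
    and b1: "\<forall>t\<ge>0. 0 \<le> \<phi>1 t \<and> \<phi>1 t \<le> l1" and b2: "\<forall>t\<ge>0. 0 \<le> \<phi>2 t \<and> \<phi>2 t \<le> l2"
    and mo: "mono_on {0..} (\<lambda>t. \<phi>1 t + \<phi>2 t)"
    and gi: "set_integrable lborel {0..} (\<lambda>t.
        \<phi>1 t * (f2 t * ((LINT u:{0..t}|lborel. G1 u) - r1) - G1 t * G2 t)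
      + \<phi>2 t * (f1 t * ((LINT u:{0..t}|lborel. G2 u) - r2) - G1 t * G2 t))"
  shows "(LINT t:{0..}|lborel.
        \<phi>1 t * (f2 t * ((LINT u:{0..t}|lborel. G1 u) - r1) - G1 t * G2 t)
      + \<phi>2 t * (f1 t * ((LINT u:{0..t}|lborel. G2 u) - r2) - G1 t * G2 t))
     \<le> (1 / exp 1) * (l2 * r1 + l1 * r2 + l1 * (exp 1 - 1) * min r1 r2)"
proof -
  define g where "g t = \<phi>1 t * (f2 t * (H1 t - r1) - C t) + \<phi>2 t * (f1 t * (H2 t - r2) - C t)" for t
  have geq: "(\<lambda>t. \<phi>1 t * (f2 t * ((LINT u:{0..t}|lborel. G1 u) - r1) - G1 t * G2 t)
      + \<phi>2 t * (f1 t * ((LINT u:{0..t}|lborel. G2 u) - r2) - G1 t * G2 t)) = g"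
    by (simp add: g_def H1_def H2_def C_def fun_eq_iff)
  define \<psi> where "\<psi> t = \<phi>1 t + \<phi>2 t" for t
  define u where "u t = min (\<psi> t) l1" for t
  define v where "v t = min (\<psi> t) l2" for t
  define w where "w t = v t - u t" for t
  define R where "R t = P1 t + P2 t - C t" for t
  define R2 where "R2 t = P2 t - C t" for t
  define \<beta> where "\<beta> = (r1 + r2) / exp 1 + (1 - 1 / exp 1) * min r1 r2"
  have Rm: "R \<in> borel_measurable borel" unfolding R_def by measurable
  have R2m: "R2 \<in> borel_measurable borel" unfolding R2_def by measurable
  have Ri: "set_integrable lborel {0..} R" unfolding R_def using R_int[of 0] by simp
  have R2i: "set_integrable lborel {0..} R2" unfolding R2_def using R2_int[of 0] by simp
  have um: "u \<in> borel_measurable borel" unfolding u_def \<psi>_def using m1 m2 by measurable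
  have wm: "w \<in> borel_measurable borel" unfolding w_def v_def u_def \<psi>_def using m1 m2 by measurable
  have psi0: "0 \<le> \<psi> t" if "0 \<le> t" for t using b1 b2 that by (simp add: \<psi>_def)
  have ub: "0 \<le> u t \<and> u t \<le> l1" if "0 \<le> t" for t using psi0[OF that] l by (simp add: u_def)
  have wb: "0 \<le> w t \<and> w t \<le> l2 - l1" if "0 \<le> t" for t
    using psi0[OF that] l by (auto simp: w_def u_def v_def min_def)
  have psimono: "\<psi> s \<le> \<psi> t" if "0 \<le> s" "s \<le> t" for s t
    using mo that unfolding \<psi>_def by (auto intro: mono_onD)
  have umono: "mono_on {0..} u"
  proof (rule mono_onI)
    fix s t :: real assume "s \<in> {0..}" "t \<in> {0..}" "s \<le> t"
    then have "\<psi> s \<le> \<psi> t" using psimono by auto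
    then show "u s \<le> u t" by (auto simp: u_def min_def)
  qed
  have wmono: "mono_on {0..} w"
  proof (rule mono_onI)
    fix s t :: real assume "s \<in> {0..}" "t \<in> {0..}" "s \<le> t"
    then have "\<psi> s \<le> \<psi> t" using psimono by auto
    then show "w s \<le> w t" using l by (auto simp: w_def u_def v_def min_def)
  qed
  have pw: "g t \<le> u t * R t + w t * R2 t" if t0: "0 \<le> t" for t
  proof -
    define x where "x = \<phi>1 t"
    define y where "y = \<phi>2 t"
    have x: "0 \<le> x" "x \<le> l1" and y: "0 \<le> y" "y \<le> l2" using b1 b2 t0 by (auto simp: x_def y_def)
    have ps: "\<psi> t = x + y" by (simp add: \<psi>_def x_def y_def)
    have xu: "x \<le> u t" using x y by (simp add: u_def ps)
    have yv: "y \<le> v t" using x y by (simp add: v_def ps)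
    have vp: "v t \<le> \<psi> t" by (simp add: v_def)
    have D1: "f2 t * (H1 t - r1) \<le> P1 t" unfolding P1_def using f2nn[of t] by (intro mult_left_mono) auto
    have D2: "f1 t * (H2 t - r2) \<le> P2 t" unfolding P2_def using f1nn[of t] by (intro mult_left_mono) auto
    have "x * (f2 t * (H1 t - r1)) \<le> x * P1 t" using D1 x by (intro mult_left_mono) auto
    also have "\<dots> \<le> u t * P1 t" using xu P1nn[of t] by (intro mult_right_mono) auto
    finally have e1: "x * (f2 t * (H1 t - r1)) \<le> u t * P1 t" .
    have "y * (f1 t * (H2 t - r2)) \<le> y * P2 t" using D2 y by (intro mult_left_mono) auto
    also have "\<dots> \<le> v t * P2 t" using yv P2nn[of t] by (intro mult_right_mono) auto
    finally have e2: "y * (f1 t * (H2 t - r2)) \<le> v t * P2 t" .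
    have e3: "v t * C t \<le> \<psi> t * C t" using vp Cnn[of t] by (intro mult_right_mono) auto
    have "g t = x * (f2 t * (H1 t - r1)) + y * (f1 t * (H2 t - r2)) - \<psi> t * C t"
      by (simp add: g_def x_def y_def \<psi>_def algebra_simps)
    also have "\<dots> \<le> u t * P1 t + v t * P2 t - v t * C t" using e1 e2 e3 by linarith
    also have "\<dots> = u t * R t + w t * R2 t" by (simp add: R_def R2_def w_def algebra_simps)
    finally show ?thesis .
  qed
  have uRi: "set_integrable lborel {0..} (\<lambda>t. u t * R t)"
    by (rule set_integrable_bdd_mult[OF Ri Rm um, where K=l1]) (use ub in auto)
  have wRi: "set_integrable lborel {0..} (\<lambda>t. w t * R2 t)"
    by (rule set_integrable_bdd_mult[OF R2i R2m wm, where K="l2 - l1"]) (use wb in auto)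
  have b0: "0 \<le> \<beta>" unfolding \<beta>_def using r1p r2p
    by (intro add_nonneg_nonneg mult_nonneg_nonneg) (auto simp: field_simps)
  have hbR: "(LINT t:{a..}|lborel. R t) \<le> \<beta>" if "0 \<le> a" for a
    using R_bound[OF that] unfolding R_def \<beta>_def by simp
  have hbR2: "(LINT t:{a..}|lborel. R2 t) \<le> r1 / exp 1" if "0 \<le> a" for a
    using R2_bound[OF that] unfolding R2_def by simp
  have e0: "0 \<le> r1 / exp 1" using r1p by simp
  have L1: "(LINT t:{0..}|lborel. u t * R t) \<le> l1 * \<beta>"
    using layer[OF Rm Ri um _ umono hbR b0] ub by blast
  have L2: "(LINT t:{0..}|lborel. w t * R2 t) \<le> (l2 - l1) * (r1 / exp 1)"
    using layer[OF R2m R2i wm _ wmono hbR2 e0] wb by blast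
  have "(LINT t:{0..}|lborel. g t) \<le> (LINT t:{0..}|lborel. u t * R t + w t * R2 t)"
    using gi[unfolded geq] uRi wRi pw by (intro set_integral_mono) auto
  also have "\<dots> = (LINT t:{0..}|lborel. u t * R t) + (LINT t:{0..}|lborel. w t * R2 t)"
    using uRi wRi by simp
  also have "\<dots> \<le> l1 * \<beta> + (l2 - l1) * (r1 / exp 1)" using L1 L2 by simp
  also have "\<dots> = (1 / exp 1) * (l2 * r1 + l1 * r2 + l1 * (exp 1 - 1) * min r1 r2)"
    unfolding \<beta>_def by (simp add: field_simps)
  finally show ?thesis unfolding geq .
qed

end


lemma surv_facts:
  fixes M :: "'a measure" and X :: "'a \<Rightarrow> real" and f :: "real \<Rightarrow> real"
  assumes P: "prob_space M" and fm: "f \<in> borel_measurable borel" and fnn: "\<forall>x. f x \<ge> 0"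
    and D: "distributed M lborel X (\<lambda>x. ennreal (f x))" and Xnn: "\<forall>\<omega>\<in>space M. X \<omega> \<ge> 0"
    and bdd: "bdd_above {p * surv M X p | p. p \<ge> 0}"
  shows "\<And>t. ennreal (surv M X t) = (\<integral>\<^sup>+x. ennreal (f x) * indicator {t..} x \<partial>lborel)"
    and "\<And>t. 0 \<le> surv M X t \<and> surv M X t \<le> 1"
    and "\<And>s t. s \<le> t \<Longrightarrow> surv M X t \<le> surv M X s"
    and "\<And>t. 0 \<le> t \<Longrightarrow> t * surv M X t \<le> Rev M X"
    and "0 < Rev M X"
proof -
  interpret prob_space M by (rule P)
  show G: "ennreal (surv M X t) = (\<integral>\<^sup>+x. ennreal (f x) * indicator {t..} x \<partial>lborel)" for t
  proof -
    have "X -` {t..} \<inter> space M = {\<omega> \<in> space M. X \<omega> \<ge> t}" by auto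
    then have "emeasure M {\<omega> \<in> space M. X \<omega> \<ge> t} = (\<integral>\<^sup>+x. ennreal (f x) * indicator {t..} x \<partial>lborel)"
      using distributed_emeasure[OF D, of "{t..}"] by simp
    then show ?thesis by (simp add: surv_def emeasure_eq_measure)
  qed
  show Gb: "0 \<le> surv M X t \<and> surv M X t \<le> 1" for t
    by (simp add: surv_def)
  show Ga: "surv M X t \<le> surv M X s" if "s \<le> t" for s t
  proof -
    have "(\<integral>\<^sup>+x. ennreal (f x) * indicator {t..} x \<partial>lborel) \<le> (\<integral>\<^sup>+x. ennreal (f x) * indicator {s..} x \<partial>lborel)"
      using that by (intro nn_integral_mono) (auto split: split_indicator)
    then have "ennreal (surv M X t) \<le> ennreal (surv M X s)" by (simp add: G)
    then show ?thesis using Gb[of s] by (subst (asm) ennreal_le_iff) auto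
  qed
  show Gr: "t * surv M X t \<le> Rev M X" if "0 \<le> t" for t
    unfolding Rev_def by (rule cSup_upper[OF _ bdd]) (use that in auto)
  show "0 < Rev M X"
  proof (rule ccontr)
    assume "\<not> 0 < Rev M X"
    then have z: "surv M X t = 0" if "0 < t" for t
    proof -
      have "t * surv M X t \<le> 0" using Gr[of t] that \<open>\<not> 0 < Rev M X\<close> by simp
      then have "surv M X t \<le> 0" using that by (simp add: mult_le_0_iff)
      then show ?thesis using Gb[of t] by simp
    qed
    define Dn where "Dn = density lborel (\<lambda>x. ennreal (f x))"
    have eD: "emeasure Dn A = (\<integral>\<^sup>+x. ennreal (f x) * indicator A x \<partial>lborel)" if "A \<in> sets borel" for A
      unfolding Dn_def using that fm by (subst emeasure_density) auto
    have e0: "emeasure Dn {0} = 0"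
    proof -
      have ae: "AE x in lborel. ennreal (f x) * indicator {0} x = 0"
        using AE_lborel_singleton[of 0] by eventually_elim (simp split: split_indicator)
      have "(\<integral>\<^sup>+x. ennreal (f x) * indicator {0} x \<partial>lborel) = 0"
        using fm ae by (subst nn_integral_0_iff_AE) auto
      then show ?thesis using eD[of "{0}"] by simp
    qed
    have eU: "emeasure Dn (\<Union>n. {1 / real (Suc n)..}) = 0"
    proof (rule emeasure_UN_eq_0)
      fix n :: nat
      have "emeasure Dn {1 / real (Suc n)..} = ennreal (surv M X (1 / real (Suc n)))"
        using eD[of "{1 / real (Suc n)..}"] G by simp
      then show "emeasure Dn {1 / real (Suc n)..} = 0" using z[of "1 / real (Suc n)"] by simp
    qed (auto simp: Dn_def)
    have sub: "{0..} \<subseteq> {0} \<union> (\<Union>n. {1 / real (Suc n)..})"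
    proof
      fix x :: real assume "x \<in> {0..}"
      show "x \<in> {0} \<union> (\<Union>n. {1 / real (Suc n)..})"
      proof (cases "x = 0")
        case False
        then have "0 < x" using \<open>x \<in> {0..}\<close> by simp
        then obtain n where "inverse (real (Suc n)) < x" using reals_Archimedean by blast
        then show ?thesis by (auto simp: field_simps intro!: exI[of _ n])
      qed simp
    qed
    have "emeasure Dn {0..} \<le> emeasure Dn ({0} \<union> (\<Union>n. {1 / real (Suc n)..}))"
      by (rule emeasure_mono[OF sub]) (auto simp: Dn_def)
    also have "\<dots> \<le> emeasure Dn {0} + emeasure Dn (\<Union>n. {1 / real (Suc n)..})"
      by (rule emeasure_subadditive) (auto simp: Dn_def)
    also have "\<dots> = 0" using e0 eU by simp
    finally have "emeasure Dn {0..} = 0" by simp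
    moreover have "emeasure Dn {0..} = ennreal (surv M X 0)" using eD[of "{0..}"] G by simp
    moreover have "surv M X 0 = 1"
    proof -
      have "{\<omega> \<in> space M. X \<omega> \<ge> 0} = space M" using Xnn by auto
      then show ?thesis by (simp add: surv_def prob_space)
    qed
    ultimately show False by simp
  qed
qed

theorem proposition4:
  fixes M :: "'a measure" and X1 X2 :: "'a \<Rightarrow> real"
    and f1 f2 :: "real \<Rightarrow> real" and l1 l2 :: real
  assumes "prob_space M"
    and "f1 \<in> borel_measurable borel" and "f2 \<in> borel_measurable borel"
    and "\<forall>x. f1 x \<ge> 0" and "\<forall>x. f2 x \<ge> 0"
    and "distributed M lborel X1 (\<lambda>x. ennreal (f1 x))"
    and "distributed M lborel X2 (\<lambda>x. ennreal (f2 x))"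
    and "\<forall>\<omega>\<in>space M. X1 \<omega> \<ge> 0" and "\<forall>\<omega>\<in>space M. X2 \<omega> \<ge> 0"
    and "bdd_above {p * surv M X1 p | p. p \<ge> 0}"
    and "bdd_above {p * surv M X2 p | p. p \<ge> 0}"
    and "0 < l1" and "l1 \<le> l2" and "l2 \<le> 1"
  shows "\<forall>\<phi>1 \<phi>2 :: real \<Rightarrow> real.
     \<phi>1 \<in> borel_measurable borel \<and> \<phi>2 \<in> borel_measurable borel \<and>
     (\<forall>t\<ge>0. 0 \<le> \<phi>1 t \<and> \<phi>1 t \<le> l1) \<and>
     (\<forall>t\<ge>0. 0 \<le> \<phi>2 t \<and> \<phi>2 t \<le> l2) \<and>
     mono_on {0..} (\<lambda>t. \<phi>1 t + \<phi>2 t) \<and>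
     set_integrable lborel {0..} (\<lambda>t.
        \<phi>1 t * (f2 t * (cumsurv M X1 t - Rev M X1) - surv M X1 t * surv M X2 t)
      + \<phi>2 t * (f1 t * (cumsurv M X2 t - Rev M X2) - surv M X1 t * surv M X2 t))
     \<longrightarrow>
     (LINT t:{0..}|lborel.
        \<phi>1 t * (f2 t * (cumsurv M X1 t - Rev M X1) - surv M X1 t * surv M X2 t)
      + \<phi>2 t * (f1 t * (cumsurv M X2 t - Rev M X2) - surv M X1 t * surv M X2 t))
     \<le> (1 / exp 1) * (l2 * Rev M X1 + l1 * Rev M X2
                       + l1 * (exp 1 - 1) * min (Rev M X1) (Rev M X2))"
proof (intro allI impI)
  fix \<phi>1 \<phi>2 :: "real \<Rightarrow> real"
  assume H: "\<phi>1 \<in> borel_measurable borel \<and> \<phi>2 \<in> borel_measurable borel \<and>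
     (\<forall>t\<ge>0. 0 \<le> \<phi>1 t \<and> \<phi>1 t \<le> l1) \<and>
     (\<forall>t\<ge>0. 0 \<le> \<phi>2 t \<and> \<phi>2 t \<le> l2) \<and>
     mono_on {0..} (\<lambda>t. \<phi>1 t + \<phi>2 t) \<and>
     set_integrable lborel {0..} (\<lambda>t.
        \<phi>1 t * (f2 t * (cumsurv M X1 t - Rev M X1) - surv M X1 t * surv M X2 t)
      + \<phi>2 t * (f1 t * (cumsurv M X2 t - Rev M X2) - surv M X1 t * surv M X2 t))"
  note S1 = surv_facts[OF assms(1) assms(2) assms(4) assms(6) assms(8) assms(10)]
  note S2 = surv_facts[OF assms(1) assms(3) assms(5) assms(7) assms(9) assms(11)]
  interpret two_set "surv M X1" "surv M X2" f1 f2 "Rev M X1" "Rev M X2"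
    by unfold_locales (use assms S1 S2 in auto)
  show "(LINT t:{0..}|lborel.
        \<phi>1 t * (f2 t * (cumsurv M X1 t - Rev M X1) - surv M X1 t * surv M X2 t)
      + \<phi>2 t * (f1 t * (cumsurv M X2 t - Rev M X2) - surv M X1 t * surv M X2 t))
     \<le> (1 / exp 1) * (l2 * Rev M X1 + l1 * Rev M X2
                       + l1 * (exp 1 - 1) * min (Rev M X1) (Rev M X2))"
    using main_abs[of l1 l2 \<phi>1 \<phi>2] H assms(12,13) unfolding cumsurv_def by blast
qed


end
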